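(* Let $\mathcal{G}\rightrightarrows M$ be a locally subductive diffeological groupoid. Then its abelianization $\mathcal{G}^{ab}=\mathcal{G}/(\mathcal{G},\mathcal{G})$ (with the quotient diffeology) is a locally subductive diffeological groupoid.
   Context: A diffeological groupoid is a groupoid object in diffeological spaces; $(\mathcal{G},\mathcal{G})=\bigcup_x(\mathcal{G}_x,\mathcal{G}_x)$ is the union of the commutator subgroups of the isotropy groups, and $\mathcal{G}/(\mathcal{G},\mathcal{G})$ carries the quotient diffeology (maps locally constant or locally of the form $q\circ Q$ with $Q$ a plot of $\mathcal{G}$). A smooth map $f:X\to X'$ is locally subductive at $x$ if for every plot $P$ of $X'$ with $P(0)=f(x)$ there are an open neighborhood $V$ of $0$ and a plot $Q:V\to X$ with $Q(0)=x$ and $f\circ Q=P|_V$; it is a local subduction if locally subductive at all points. A diffeological groupoid is locally subductive if its source and target maps are local subductions. *)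

theory Defs
  imports Complex_Main "HOL-Library.FuncSet"
begin

text \<open>R^n is represented as the set of sequences nat => real vanishing from index n on.\<close>

definition Eucl :: "nat \<Rightarrow> (nat \<Rightarrow> real) set" where
  "Eucl n = {x. \<forall>i\<ge>n. x i = 0}"

definition eopen :: "nat \<Rightarrow> (nat \<Rightarrow> real) set \<Rightarrow> bool" where
  "eopen n U \<longleftrightarrow> U \<subseteq> Eucl n \<and>
     (\<forall>x\<in>U. \<exists>e>0. \<forall>y\<in>Eucl n. (\<forall>i<n. \<bar>y i - x i\<bar> < e) \<longrightarrow> y \<in> U)"

definition econt :: "nat \<Rightarrow> (nat \<Rightarrow> real) set \<Rightarrow> ((nat \<Rightarrow> real) \<Rightarrow> real) \<Rightarrow> bool" where
  "econt n U f \<longleftrightarrow> (\<forall>x\<in>U. \<forall>e>0. \<exists>d>0. \<forall>y\<in>U.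
      (\<forall>i<n. \<bar>y i - x i\<bar> < d) \<longrightarrow> \<bar>f y - f x\<bar> < e)"

definition has_pd :: "(nat \<Rightarrow> real) set \<Rightarrow> ((nat \<Rightarrow> real) \<Rightarrow> real) \<Rightarrow> nat
    \<Rightarrow> ((nat \<Rightarrow> real) \<Rightarrow> real) \<Rightarrow> bool" where
  "has_pd U f i g \<longleftrightarrow> (\<forall>x\<in>U. ((\<lambda>t. f (x(i := x i + t))) has_real_derivative g x) (at 0))"

primrec Ck :: "nat \<Rightarrow> (nat \<Rightarrow> real) set \<Rightarrow> nat \<Rightarrow> ((nat \<Rightarrow> real) \<Rightarrow> real) set" where
  "Ck n U 0 = {f. econt n U f}"
| "Ck n U (Suc k) = {f. econt n U f \<and> (\<forall>i<n. \<exists>g\<in>Ck n U k. has_pd U f i g)}"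

definition smooth_fun :: "nat \<Rightarrow> (nat \<Rightarrow> real) set \<Rightarrow> ((nat \<Rightarrow> real) \<Rightarrow> real) \<Rightarrow> bool" where
  "smooth_fun n U f \<longleftrightarrow> (\<forall>k. f \<in> Ck n U k)"

definition smooth_map :: "nat \<Rightarrow> (nat \<Rightarrow> real) set \<Rightarrow> nat
    \<Rightarrow> ((nat \<Rightarrow> real) \<Rightarrow> (nat \<Rightarrow> real)) \<Rightarrow> bool" where
  "smooth_map m V n F \<longleftrightarrow> (\<forall>x\<in>V. F x \<in> Eucl n) \<and> (\<forall>j<n. smooth_fun m V (\<lambda>x. F x j))"

text \<open>A plot is a triple (n, U, P) with U open in R^n and P : U -> X (extensional).\<close>
type_synonym 'a diffeology = "(nat \<times> (nat \<Rightarrow> real) set \<times> ((nat \<Rightarrow> real) \<Rightarrow> 'a)) set"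

definition diffeology :: "'a set \<Rightarrow> 'a diffeology \<Rightarrow> bool" where
  "diffeology X D \<longleftrightarrow>
     (\<forall>n U P. (n, U, P) \<in> D \<longrightarrow> eopen n U \<and> P \<in> U \<rightarrow> X \<and> P \<in> extensional U)
   \<and> (\<forall>n U x. eopen n U \<and> x \<in> X \<longrightarrow> (n, U, restrict (\<lambda>_. x) U) \<in> D)
   \<and> (\<forall>n U P. eopen n U \<and> P \<in> U \<rightarrow> X \<and> P \<in> extensional U \<and>
        (\<forall>u\<in>U. \<exists>V. eopen n V \<and> u \<in> V \<and> V \<subseteq> U \<and> (n, V, restrict P V) \<in> D)
        \<longrightarrow> (n, U, P) \<in> D)
   \<and> (\<forall>n U P m V F. (n, U, P) \<in> D \<and> eopen m V \<and> smooth_map m V n F \<and> F ` V \<subseteq> U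
        \<longrightarrow> (m, V, restrict (P \<circ> F) V) \<in> D)"

definition dsmooth :: "'a diffeology \<Rightarrow> 'b diffeology \<Rightarrow> ('a \<Rightarrow> 'b) \<Rightarrow> bool" where
  "dsmooth DX DY f \<longleftrightarrow> (\<forall>n U P. (n, U, P) \<in> DX \<longrightarrow> (n, U, restrict (f \<circ> P) U) \<in> DY)"

definition prod_diff :: "'a diffeology \<Rightarrow> 'b diffeology \<Rightarrow> ('a \<times> 'b) diffeology" where
  "prod_diff D1 D2 = {(n, U, P). eopen n U \<and> P \<in> extensional U \<and>
      (n, U, restrict (fst \<circ> P) U) \<in> D1 \<and> (n, U, restrict (snd \<circ> P) U) \<in> D2}"

definition sub_diff :: "'a diffeology \<Rightarrow> 'a set \<Rightarrow> 'a diffeology" where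
  "sub_diff D A = {(n, U, P). (n, U, P) \<in> D \<and> P ` U \<subseteq> A}"

definition quot_diff :: "'a set \<Rightarrow> 'a diffeology \<Rightarrow> ('a \<Rightarrow> 'b) \<Rightarrow> 'b diffeology" where
  "quot_diff X D q = {(n, U, P). eopen n U \<and> P \<in> extensional U \<and> P \<in> U \<rightarrow> q ` X \<and>
      (\<forall>u\<in>U. \<exists>V. eopen n V \<and> u \<in> V \<and> V \<subseteq> U \<and>
         ((\<exists>c. \<forall>v\<in>V. P v = c) \<or> (\<exists>Q. (n, V, Q) \<in> D \<and> (\<forall>v\<in>V. P v = q (Q v)))))}"

definition zvec :: "nat \<Rightarrow> real" where "zvec = (\<lambda>_. 0)"

definition locally_subductive_at :: "'a diffeology \<Rightarrow> 'b diffeology \<Rightarrow> ('a \<Rightarrow> 'b) \<Rightarrow> 'a \<Rightarrow> bool" where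
  "locally_subductive_at DX DY f x \<longleftrightarrow>
     (\<forall>n U P. (n, U, P) \<in> DY \<and> zvec \<in> U \<and> P zvec = f x \<longrightarrow>
        (\<exists>V Q. eopen n V \<and> zvec \<in> V \<and> V \<subseteq> U \<and> (n, V, Q) \<in> DX \<and> Q zvec = x \<and>
               (\<forall>v\<in>V. f (Q v) = P v)))"

definition local_subduction :: "'a set \<Rightarrow> 'a diffeology \<Rightarrow> 'b diffeology \<Rightarrow> ('a \<Rightarrow> 'b) \<Rightarrow> bool" where
  "local_subduction X DX DY f \<longleftrightarrow> dsmooth DX DY f \<and> (\<forall>x\<in>X. locally_subductive_at DX DY f x)"

record ('g, 'm) dgpd =
  arr :: "'g set"
  obj :: "'m set"
  darr :: "'g diffeology"
  dobj :: "'m diffeology"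
  gsrc :: "'g \<Rightarrow> 'm"
  gtgt :: "'g \<Rightarrow> 'm"
  gid :: "'m \<Rightarrow> 'g"
  ginv :: "'g \<Rightarrow> 'g"
  gcomp :: "'g \<Rightarrow> 'g \<Rightarrow> 'g"

definition composable :: "('g, 'm, 'z) dgpd_scheme \<Rightarrow> ('g \<times> 'g) set" where
  "composable G = {(g, h). g \<in> arr G \<and> h \<in> arr G \<and> gsrc G g = gtgt G h}"

definition groupoid :: "('g, 'm, 'z) dgpd_scheme \<Rightarrow> bool" where
  "groupoid G \<longleftrightarrow>
     gsrc G \<in> arr G \<rightarrow> obj G \<and> gtgt G \<in> arr G \<rightarrow> obj G \<and> gid G \<in> obj G \<rightarrow> arr G
   \<and> (\<forall>x\<in>obj G. gsrc G (gid G x) = x \<and> gtgt G (gid G x) = x)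
   \<and> (\<forall>(g, h)\<in>composable G. gcomp G g h \<in> arr G \<and>
        gsrc G (gcomp G g h) = gsrc G h \<and> gtgt G (gcomp G g h) = gtgt G g)
   \<and> (\<forall>f\<in>arr G. \<forall>g\<in>arr G. \<forall>h\<in>arr G. gsrc G f = gtgt G g \<and> gsrc G g = gtgt G h \<longrightarrow>
        gcomp G (gcomp G f g) h = gcomp G f (gcomp G g h))
   \<and> (\<forall>g\<in>arr G. gcomp G (gid G (gtgt G g)) g = g \<and> gcomp G g (gid G (gsrc G g)) = g)
   \<and> (\<forall>g\<in>arr G. ginv G g \<in> arr G \<and> gsrc G (ginv G g) = gtgt G g \<and> gtgt G (ginv G g) = gsrc G g
        \<and> gcomp G (ginv G g) g = gid G (gsrc G g) \<and> gcomp G g (ginv G g) = gid G (gtgt G g))"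

definition diffeological_groupoid :: "('g, 'm, 'z) dgpd_scheme \<Rightarrow> bool" where
  "diffeological_groupoid G \<longleftrightarrow> groupoid G
   \<and> diffeology (arr G) (darr G) \<and> diffeology (obj G) (dobj G)
   \<and> dsmooth (darr G) (dobj G) (gsrc G) \<and> dsmooth (darr G) (dobj G) (gtgt G)
   \<and> dsmooth (dobj G) (darr G) (gid G) \<and> dsmooth (darr G) (darr G) (ginv G)
   \<and> dsmooth (sub_diff (prod_diff (darr G) (darr G)) (composable G)) (darr G)
        (\<lambda>p. gcomp G (fst p) (snd p))"

definition locally_subductive_dgpd :: "('g, 'm, 'z) dgpd_scheme \<Rightarrow> bool" where
  "locally_subductive_dgpd G \<longleftrightarrow> diffeological_groupoid G
   \<and> local_subduction (arr G) (darr G) (dobj G) (gsrc G)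
   \<and> local_subduction (arr G) (darr G) (dobj G) (gtgt G)"

inductive_set comm_sub :: "('g, 'm, 'z) dgpd_scheme \<Rightarrow> 'm \<Rightarrow> 'g set" for G x where
  unit: "x \<in> obj G \<Longrightarrow> gid G x \<in> comm_sub G x"
| comm: "\<lbrakk>a \<in> arr G; b \<in> arr G; gsrc G a = x; gtgt G a = x; gsrc G b = x; gtgt G b = x\<rbrakk>
     \<Longrightarrow> gcomp G (gcomp G a b) (gcomp G (ginv G a) (ginv G b)) \<in> comm_sub G x"
| mult: "\<lbrakk>k \<in> comm_sub G x; l \<in> comm_sub G x\<rbrakk> \<Longrightarrow> gcomp G k l \<in> comm_sub G x"
| inverse: "k \<in> comm_sub G x \<Longrightarrow> ginv G k \<in> comm_sub G x"

definition comm_subgpd :: "('g, 'm, 'z) dgpd_scheme \<Rightarrow> 'g set" where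
  "comm_subgpd G = (\<Union>x\<in>obj G. comm_sub G x)"

definition ab_rel :: "('g, 'm, 'z) dgpd_scheme \<Rightarrow> 'g \<Rightarrow> 'g \<Rightarrow> bool" where
  "ab_rel G g h \<longleftrightarrow> g \<in> arr G \<and> h \<in> arr G \<and>
     (\<exists>k\<in>comm_subgpd G. gsrc G k = gtgt G g \<and> h = gcomp G k g)"

definition ab_class :: "('g, 'm, 'z) dgpd_scheme \<Rightarrow> 'g \<Rightarrow> 'g set" where
  "ab_class G g = {h. ab_rel G g h}"

definition abelianization :: "('g, 'm, 'z) dgpd_scheme \<Rightarrow> ('g set, 'm) dgpd" where
  "abelianization G = \<lparr>
     arr = ab_class G ` arr G,
     obj = obj G,
     darr = quot_diff (arr G) (darr G) (ab_class G),
     dobj = dobj G,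
     gsrc = (\<lambda>c. gsrc G (SOME g. g \<in> c)),
     gtgt = (\<lambda>c. gtgt G (SOME g. g \<in> c)),
     gid = (\<lambda>x. ab_class G (gid G x)),
     ginv = (\<lambda>c. ab_class G (ginv G (SOME g. g \<in> c))),
     gcomp = (\<lambda>c d. ab_class G (gcomp G (SOME g. g \<in> c) (SOME h. h \<in> d))) \<rparr>"

end

theory Submission
  imports Defs
begin

locale gpd =
  fixes G :: "('g, 'm, 'z) dgpd_scheme"
  assumes gp: "groupoid G"
begin

lemma src_in: "g \<in> arr G \<Longrightarrow> gsrc G g \<in> obj G"
  using gp unfolding groupoid_def by auto
lemma tgt_in: "g \<in> arr G \<Longrightarrow> gtgt G g \<in> obj G"
  using gp unfolding groupoid_def by auto
lemma id_in[simp]: "x \<in> obj G \<Longrightarrow> gid G x \<in> arr G"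
  using gp unfolding groupoid_def by auto
lemma id_src[simp]: "x \<in> obj G \<Longrightarrow> gsrc G (gid G x) = x"
  using gp unfolding groupoid_def by auto
lemma id_tgt[simp]: "x \<in> obj G \<Longrightarrow> gtgt G (gid G x) = x"
  using gp unfolding groupoid_def by auto
lemma comp_in[simp]: "a \<in> arr G \<Longrightarrow> b \<in> arr G \<Longrightarrow> gsrc G a = gtgt G b \<Longrightarrow> gcomp G a b \<in> arr G"
  using gp unfolding groupoid_def composable_def by auto
lemma comp_src[simp]: "a \<in> arr G \<Longrightarrow> b \<in> arr G \<Longrightarrow> gsrc G a = gtgt G b \<Longrightarrow> gsrc G (gcomp G a b) = gsrc G b"
  using gp unfolding groupoid_def composable_def by auto
lemma comp_tgt[simp]: "a \<in> arr G \<Longrightarrow> b \<in> arr G \<Longrightarrow> gsrc G a = gtgt G b \<Longrightarrow> gtgt G (gcomp G a b) = gtgt G a"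
  using gp unfolding groupoid_def composable_def by auto
lemma assoc[simp]: "f \<in> arr G \<Longrightarrow> g \<in> arr G \<Longrightarrow> h \<in> arr G \<Longrightarrow> gsrc G f = gtgt G g \<Longrightarrow> gsrc G g = gtgt G h \<Longrightarrow>
   gcomp G (gcomp G f g) h = gcomp G f (gcomp G g h)"
  using gp unfolding groupoid_def by blast
lemma lid: "g \<in> arr G \<Longrightarrow> gcomp G (gid G (gtgt G g)) g = g"
  using gp unfolding groupoid_def by blast
lemma rid: "g \<in> arr G \<Longrightarrow> gcomp G g (gid G (gsrc G g)) = g"
  using gp unfolding groupoid_def by blast
lemma lid'[simp]: "g \<in> arr G \<Longrightarrow> x = gtgt G g \<Longrightarrow> gcomp G (gid G x) g = g"
  using lid by blast
lemma rid'[simp]: "g \<in> arr G \<Longrightarrow> x = gsrc G g \<Longrightarrow> gcomp G g (gid G x) = g"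
  using rid by blast
lemma inv_in[simp]: "g \<in> arr G \<Longrightarrow> ginv G g \<in> arr G"
  using gp unfolding groupoid_def by blast
lemma inv_src[simp]: "g \<in> arr G \<Longrightarrow> gsrc G (ginv G g) = gtgt G g"
  using gp unfolding groupoid_def by blast
lemma inv_tgt[simp]: "g \<in> arr G \<Longrightarrow> gtgt G (ginv G g) = gsrc G g"
  using gp unfolding groupoid_def by blast
lemma linv[simp]: "g \<in> arr G \<Longrightarrow> gcomp G (ginv G g) g = gid G (gsrc G g)"
  using gp unfolding groupoid_def by blast
lemma rinv[simp]: "g \<in> arr G \<Longrightarrow> gcomp G g (ginv G g) = gid G (gtgt G g)"
  using gp unfolding groupoid_def by blast

lemma linv2[simp]: "g \<in> arr G \<Longrightarrow> h \<in> arr G \<Longrightarrow> gsrc G g = gtgt G h \<Longrightarrow> gcomp G (ginv G g) (gcomp G g h) = h"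
proof -
  assume a: "g \<in> arr G" "h \<in> arr G" "gsrc G g = gtgt G h"
  have "gcomp G (gcomp G (ginv G g) g) h = gcomp G (ginv G g) (gcomp G g h)"
    using a by (intro assoc) auto
  moreover have "gcomp G (gcomp G (ginv G g) g) h = h" using a by (simp add: src_in)
  ultimately show ?thesis by simp
qed
lemma rinv2[simp]: "g \<in> arr G \<Longrightarrow> h \<in> arr G \<Longrightarrow> gtgt G g = gtgt G h \<Longrightarrow> gcomp G g (gcomp G (ginv G g) h) = h"
proof -
  assume a: "g \<in> arr G" "h \<in> arr G" "gtgt G g = gtgt G h"
  have "gcomp G (gcomp G g (ginv G g)) h = gcomp G g (gcomp G (ginv G g) h)"
    using a by (intro assoc) auto
  moreover have "gcomp G (gcomp G g (ginv G g)) h = h" using a by (simp add: tgt_in)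
  ultimately show ?thesis by simp
qed

lemma inv_unique: "a \<in> arr G \<Longrightarrow> b \<in> arr G \<Longrightarrow> gsrc G a = gtgt G b \<Longrightarrow> gcomp G a b = gid G (gtgt G a)
   \<Longrightarrow> b = ginv G a"
proof -
  assume h: "a \<in> arr G" "b \<in> arr G" "gsrc G a = gtgt G b" "gcomp G a b = gid G (gtgt G a)"
  have "b = gcomp G (ginv G a) (gcomp G a b)" using h(1-3) by simp
  also have "\<dots> = gcomp G (ginv G a) (gid G (gtgt G a))" using h by simp
  also have "\<dots> = ginv G a" using h by simp
  finally show ?thesis .
qed

lemma inv_inv[simp]: "a \<in> arr G \<Longrightarrow> ginv G (ginv G a) = a"
  by (rule inv_unique[symmetric]) (auto simp: src_in)

lemma inv_comp[simp]: "a \<in> arr G \<Longrightarrow> b \<in> arr G \<Longrightarrow> gsrc G a = gtgt G b \<Longrightarrow>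
   ginv G (gcomp G a b) = gcomp G (ginv G b) (ginv G a)"
  apply (rule inv_unique[symmetric])
  apply (auto simp: src_in tgt_in)
  done

lemma inv_id[simp]: "x \<in> obj G \<Longrightarrow> ginv G (gid G x) = gid G x"
  by (rule inv_unique[symmetric]) auto

end

context gpd begin

lemma cs_iso: "k \<in> comm_sub G x \<Longrightarrow> k \<in> arr G \<and> gsrc G k = x \<and> gtgt G k = x \<and> x \<in> obj G"
  by (induction rule: comm_sub.induct) (auto simp: src_in)

lemma cs_conj: "l \<in> comm_sub G y \<Longrightarrow> a \<in> arr G \<Longrightarrow> gsrc G a = y \<Longrightarrow>
   gcomp G a (gcomp G l (ginv G a)) \<in> comm_sub G (gtgt G a)"
proof (induction rule: comm_sub.induct)
  case unit
  then show ?case by (auto intro: comm_sub.unit simp: tgt_in)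
next
  case (comm b c)
  let ?B = "gcomp G a (gcomp G b (ginv G a))" and ?C = "gcomp G a (gcomp G c (ginv G a))"
  have "gcomp G (gcomp G ?B ?C) (gcomp G (ginv G ?B) (ginv G ?C)) \<in> comm_sub G (gtgt G a)"
    by (rule comm_sub.comm) (use comm in auto)
  moreover have "gcomp G (gcomp G ?B ?C) (gcomp G (ginv G ?B) (ginv G ?C)) =
     gcomp G a (gcomp G (gcomp G (gcomp G b c) (gcomp G (ginv G b) (ginv G c))) (ginv G a))"
    using comm by simp
  ultimately show ?case by simp
next
  case (mult k l)
  have "gcomp G (gcomp G a (gcomp G k (ginv G a))) (gcomp G a (gcomp G l (ginv G a))) \<in> comm_sub G (gtgt G a)"
    by (rule comm_sub.mult) (use mult in auto)
  moreover have "gcomp G (gcomp G a (gcomp G k (ginv G a))) (gcomp G a (gcomp G l (ginv G a)))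
     = gcomp G a (gcomp G (gcomp G k l) (ginv G a))"
    using mult cs_iso[of k] cs_iso[of l] by simp
  ultimately show ?case by simp
next
  case (inverse k)
  have "ginv G (gcomp G a (gcomp G k (ginv G a))) \<in> comm_sub G (gtgt G a)"
    by (rule comm_sub.inverse) (use inverse in auto)
  moreover have "ginv G (gcomp G a (gcomp G k (ginv G a))) = gcomp G a (gcomp G (ginv G k) (ginv G a))"
    using inverse cs_iso[of k] by simp
  ultimately show ?case by simp
qed

end

context gpd begin

lemma cls_iff: "h \<in> ab_class G g \<longleftrightarrow> g \<in> arr G \<and> h \<in> arr G \<and>
   (\<exists>k. k \<in> comm_sub G (gtgt G g) \<and> h = gcomp G k g)"
proof
  assume "h \<in> ab_class G g"
  then show "g \<in> arr G \<and> h \<in> arr G \<and> (\<exists>k. k \<in> comm_sub G (gtgt G g) \<and> h = gcomp G k g)"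
    unfolding ab_class_def ab_rel_def comm_subgpd_def using cs_iso by fastforce
next
  assume "g \<in> arr G \<and> h \<in> arr G \<and> (\<exists>k. k \<in> comm_sub G (gtgt G g) \<and> h = gcomp G k g)"
  then show "h \<in> ab_class G g"
    unfolding ab_class_def ab_rel_def comm_subgpd_def using cs_iso by fastforce
qed

lemma cls_refl: "g \<in> arr G \<Longrightarrow> g \<in> ab_class G g"
  unfolding cls_iff by (rule conjI, simp, rule conjI, simp, rule exI[of _ "gid G (gtgt G g)"])
    (auto intro: comm_sub.unit simp: tgt_in)

lemma cls_st: "h \<in> ab_class G g \<Longrightarrow> g \<in> arr G \<and> h \<in> arr G \<and> gsrc G h = gsrc G g \<and> gtgt G h = gtgt G g"
  unfolding cls_iff using cs_iso by fastforce

lemma cls_sym: "h \<in> ab_class G g \<Longrightarrow> g \<in> ab_class G h"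
proof -
  assume a: "h \<in> ab_class G g"
  then obtain k where k: "g \<in> arr G" "h \<in> arr G" "k \<in> comm_sub G (gtgt G g)" "h = gcomp G k g"
    unfolding cls_iff by blast
  have t: "gtgt G h = gtgt G g" using cls_st[OF a] by simp
  show ?thesis unfolding cls_iff
    using k t cs_iso[OF k(3)] by (intro conjI exI[of _ "ginv G k"]) (auto intro: comm_sub.inverse)
qed

lemma cls_trans: "h \<in> ab_class G g \<Longrightarrow> j \<in> ab_class G h \<Longrightarrow> j \<in> ab_class G g"
proof -
  assume a: "h \<in> ab_class G g" and b: "j \<in> ab_class G h"
  then obtain k where k: "g \<in> arr G" "h \<in> arr G" "k \<in> comm_sub G (gtgt G g)" "h = gcomp G k g"
    unfolding cls_iff by blast
  obtain l where l: "j \<in> arr G" "l \<in> comm_sub G (gtgt G h)" "j = gcomp G l h"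
    using b unfolding cls_iff by blast
  have t: "gtgt G h = gtgt G g" using cls_st[OF a] by simp
  show ?thesis unfolding cls_iff
    using k l t cs_iso[OF k(3)] cs_iso[OF l(2)] by (intro conjI exI[of _ "gcomp G l k"]) (auto intro: comm_sub.mult)
qed

lemma cls_eq: "h \<in> ab_class G g \<Longrightarrow> ab_class G h = ab_class G g"
  using cls_sym cls_trans by blast

lemma cls_eq_iff: "g \<in> arr G \<Longrightarrow> h \<in> arr G \<Longrightarrow> ab_class G h = ab_class G g \<longleftrightarrow> h \<in> ab_class G g"
  using cls_eq cls_refl by blast

definition rep :: "'g set \<Rightarrow> 'g" where "rep c = (SOME g. g \<in> c)"

lemma rep_in: "g \<in> arr G \<Longrightarrow> rep (ab_class G g) \<in> ab_class G g"
  unfolding rep_def by (rule someI) (rule cls_refl)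

lemma rep_props: "g \<in> arr G \<Longrightarrow> rep (ab_class G g) \<in> arr G \<and> gsrc G (rep (ab_class G g)) = gsrc G g
   \<and> gtgt G (rep (ab_class G g)) = gtgt G g \<and> ab_class G (rep (ab_class G g)) = ab_class G g"
  using rep_in cls_st cls_eq by blast

lemma cls_comp: "a' \<in> ab_class G a \<Longrightarrow> b' \<in> ab_class G b \<Longrightarrow> gsrc G a = gtgt G b \<Longrightarrow>
   ab_class G (gcomp G a' b') = ab_class G (gcomp G a b)"
proof -
  assume a: "a' \<in> ab_class G a" and b: "b' \<in> ab_class G b" and ab: "gsrc G a = gtgt G b"
  obtain k where k: "a \<in> arr G" "a' \<in> arr G" "k \<in> comm_sub G (gtgt G a)" "a' = gcomp G k a"
    using a unfolding cls_iff by blast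
  obtain l where l: "b \<in> arr G" "b' \<in> arr G" "l \<in> comm_sub G (gtgt G b)" "b' = gcomp G l b"
    using b unfolding cls_iff by blast
  have c: "gcomp G a (gcomp G l (ginv G a)) \<in> comm_sub G (gtgt G a)"
    using cs_conj[OF l(3) k(1)] ab by simp
  note i = cs_iso[OF k(3)] cs_iso[OF l(3)] cs_iso[OF c]
  have "gcomp G a' b' \<in> ab_class G (gcomp G a b)" unfolding cls_iff
    apply (intro conjI exI[of _ "gcomp G k (gcomp G a (gcomp G l (ginv G a)))"])
    using k l ab i comm_sub.mult[OF k(3) c] by auto
  then show ?thesis by (rule cls_eq)
qed

lemma cls_inv: "a' \<in> ab_class G a \<Longrightarrow> ab_class G (ginv G a') = ab_class G (ginv G a)"
proof -
  assume a: "a' \<in> ab_class G a"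
  obtain k where k: "a \<in> arr G" "a' \<in> arr G" "k \<in> comm_sub G (gtgt G a)" "a' = gcomp G k a"
    using a unfolding cls_iff by blast
  have c: "gcomp G (ginv G a) (gcomp G (ginv G k) (ginv G (ginv G a))) \<in> comm_sub G (gsrc G a)"
    using cs_conj[OF comm_sub.inverse[OF k(3)], of "ginv G a"] k by simp
  note i = cs_iso[OF k(3)] cs_iso[OF c]
  have "ginv G a' \<in> ab_class G (ginv G a)" unfolding cls_iff
    apply (intro conjI exI[of _ "gcomp G (ginv G a) (gcomp G (ginv G k) (ginv G (ginv G a)))"])
    using k i c by auto
  then show ?thesis by (rule cls_eq)
qed

end

context gpd begin

abbreviation "H \<equiv> abelianization G"

lemma H_simps: "arr H = ab_class G ` arr G" "obj H = obj G" "darr H = quot_diff (arr G) (darr G) (ab_class G)"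
  "dobj H = dobj G" "gid H = (\<lambda>x. ab_class G (gid G x))"
  unfolding abelianization_def by simp_all

lemma H_src[simp]: "g \<in> arr G \<Longrightarrow> gsrc H (ab_class G g) = gsrc G g"
  using rep_props[of g] unfolding abelianization_def rep_def by simp
lemma H_tgt[simp]: "g \<in> arr G \<Longrightarrow> gtgt H (ab_class G g) = gtgt G g"
  using rep_props[of g] unfolding abelianization_def rep_def by simp
lemma H_inv[simp]: "g \<in> arr G \<Longrightarrow> ginv H (ab_class G g) = ab_class G (ginv G g)"
  using rep_in[of g] cls_inv unfolding abelianization_def rep_def by simp
lemma H_comp[simp]: "a \<in> arr G \<Longrightarrow> b \<in> arr G \<Longrightarrow> gsrc G a = gtgt G b \<Longrightarrow>
   gcomp H (ab_class G a) (ab_class G b) = ab_class G (gcomp G a b)"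
  using rep_in[of a] rep_in[of b] cls_comp unfolding abelianization_def rep_def by simp
lemma H_id[simp]: "gid H x = ab_class G (gid G x)"
  unfolding abelianization_def by simp

lemma H_groupoid: "groupoid H"
  unfolding groupoid_def composable_def H_simps
  apply (intro conjI)
  subgoal by (auto simp: src_in)
  subgoal by (auto simp: tgt_in)
  subgoal by auto
  subgoal by auto
  subgoal by auto
  subgoal by auto
  subgoal by (auto simp: tgt_in src_in)
  subgoal by auto
  done

end

lemma eopen_Int: "eopen n U \<Longrightarrow> eopen n V \<Longrightarrow> eopen n (U \<inter> V)"
  unfolding eopen_def
proof (intro conjI ballI)
  fix x assume a: "U \<subseteq> Eucl n \<and> (\<forall>x\<in>U. \<exists>e>0. \<forall>y\<in>Eucl n. (\<forall>i<n. \<bar>y i - x i\<bar> < e) \<longrightarrow> y \<in> U)"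
    "V \<subseteq> Eucl n \<and> (\<forall>x\<in>V. \<exists>e>0. \<forall>y\<in>Eucl n. (\<forall>i<n. \<bar>y i - x i\<bar> < e) \<longrightarrow> y \<in> V)"
    and x: "x \<in> U \<inter> V"
  obtain e1 where e1: "e1 > 0" "\<forall>y\<in>Eucl n. (\<forall>i<n. \<bar>y i - x i\<bar> < e1) \<longrightarrow> y \<in> U" using a x by blast
  obtain e2 where e2: "e2 > 0" "\<forall>y\<in>Eucl n. (\<forall>i<n. \<bar>y i - x i\<bar> < e2) \<longrightarrow> y \<in> V" using a x by blast
  show "\<exists>e>0. \<forall>y\<in>Eucl n. (\<forall>i<n. \<bar>y i - x i\<bar> < e) \<longrightarrow> y \<in> U \<inter> V"
    using e1 e2 by (intro exI[of _ "min e1 e2"]) auto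
qed auto

lemma econt_mono: "V \<subseteq> U \<Longrightarrow> econt n U f \<Longrightarrow> econt n V f"
  unfolding econt_def by (meson subsetD)

lemma Ck_mono: "V \<subseteq> U \<Longrightarrow> f \<in> Ck n U k \<Longrightarrow> f \<in> Ck n V k"
proof (induction k arbitrary: f)
  case 0
  then show ?case using econt_mono by simp
next
  case (Suc k)
  have "econt n V f" using Suc.prems econt_mono by simp
  moreover have "\<forall>i<n. \<exists>g\<in>Ck n V k. has_pd V f i g"
  proof (intro allI impI)
    fix i assume "i < n"
    then obtain g where "g \<in> Ck n U k" "has_pd U f i g" using Suc.prems by auto
    then show "\<exists>g\<in>Ck n V k. has_pd V f i g" using Suc.IH[of g] Suc.prems(1)
      unfolding has_pd_def by blast
  qed
  ultimately show ?case by simp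
qed

lemma smooth_map_mono: "smooth_map m U n F \<Longrightarrow> V \<subseteq> U \<Longrightarrow> smooth_map m V n F"
  unfolding smooth_map_def smooth_fun_def using Ck_mono by blast

lemma common_delta:
  fixes v :: "nat \<Rightarrow> real"
  assumes "\<forall>j<(n::nat). \<exists>d>0. \<forall>y. (\<forall>i<m. \<bar>y i - v i\<bar> < d) \<longrightarrow> Q j y"
  shows "\<exists>d>0. \<forall>y. (\<forall>i<m. \<bar>y i - v i\<bar> < d) \<longrightarrow> (\<forall>j<n. Q j y)"
  using assms
proof (induction n)
  case 0
  then show ?case by (intro exI[of _ "1::real"]) auto
next
  case (Suc n)
  obtain d1 where d1: "d1 > 0" "\<forall>y. (\<forall>i<m. \<bar>y i - v i\<bar> < d1) \<longrightarrow> (\<forall>j<n. Q j y)"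
    using Suc by auto
  obtain d2 where d2: "d2 > 0" "\<forall>y. (\<forall>i<m. \<bar>y i - v i\<bar> < d2) \<longrightarrow> Q n y"
    using Suc.prems by auto
  show ?case
  proof (intro exI[of _ "min d1 d2"] conjI allI impI)
    fix y j assume y: "\<forall>i<m. \<bar>y i - v i\<bar> < min d1 d2" and j: "j < Suc n"
    show "Q j y"
    proof (cases "j = n")
      case True then show ?thesis using d2 y by auto
    next
      case False then show ?thesis using d1 y j by auto
    qed
  qed (use d1 d2 in auto)
qed

lemma preimage_open:
  assumes V: "eopen m V" and F: "smooth_map m V n F" and W: "eopen n W"
  shows "eopen m {v\<in>V. F v \<in> W}"
  unfolding eopen_def
proof (intro conjI ballI)
  show "{v \<in> V. F v \<in> W} \<subseteq> Eucl m" using V unfolding eopen_def by auto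
next
  fix v assume v: "v \<in> {v \<in> V. F v \<in> W}"
  obtain e where e: "e > 0" "\<forall>y\<in>Eucl n. (\<forall>i<n. \<bar>y i - F v i\<bar> < e) \<longrightarrow> y \<in> W"
    using W v unfolding eopen_def by blast
  obtain eV where eV: "eV > 0" "\<forall>y\<in>Eucl m. (\<forall>i<m. \<bar>y i - v i\<bar> < eV) \<longrightarrow> y \<in> V"
    using V v unfolding eopen_def by blast
  have "\<forall>j<n. \<exists>d>0. \<forall>y. (\<forall>i<m. \<bar>y i - v i\<bar> < d) \<longrightarrow> (y \<in> V \<longrightarrow> \<bar>F y j - F v j\<bar> < e)"
  proof (intro allI impI)
    fix j assume "j < n"
    then have "econt m V (\<lambda>x. F x j)" using F unfolding smooth_map_def smooth_fun_def
      by (metis Ck.simps(1) mem_Collect_eq)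
    then show "\<exists>d>0. \<forall>y. (\<forall>i<m. \<bar>y i - v i\<bar> < d) \<longrightarrow> (y \<in> V \<longrightarrow> \<bar>F y j - F v j\<bar> < e)"
      unfolding econt_def using v e(1) by blast
  qed
  from common_delta[OF this] obtain d where d: "d > 0"
    "\<forall>y. (\<forall>i<m. \<bar>y i - v i\<bar> < d) \<longrightarrow> (\<forall>j<n. y \<in> V \<longrightarrow> \<bar>F y j - F v j\<bar> < e)" by blast
  show "\<exists>e>0. \<forall>y\<in>Eucl m. (\<forall>i<m. \<bar>y i - v i\<bar> < e) \<longrightarrow> y \<in> {v \<in> V. F v \<in> W}"
  proof (intro exI[of _ "min d eV"] conjI ballI impI)
    fix y assume y: "y \<in> Eucl m" "\<forall>i<m. \<bar>y i - v i\<bar> < min d eV"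
    then have yV: "y \<in> V" using eV by auto
    then have "F y \<in> Eucl n" using F unfolding smooth_map_def by blast
    moreover have "\<forall>i<n. \<bar>F y i - F v i\<bar> < e" using d y yV by auto
    ultimately show "y \<in> {v \<in> V. F v \<in> W}" using e yV by auto
  qed (use d eV in auto)
qed

lemma diff_plot: "diffeology X D \<Longrightarrow> (n, U, P) \<in> D \<Longrightarrow> eopen n U \<and> P \<in> U \<rightarrow> X \<and> P \<in> extensional U"
  unfolding diffeology_def by (drule conjunct1) blast
lemma diff_const: "diffeology X D \<Longrightarrow> eopen n U \<Longrightarrow> x \<in> X \<Longrightarrow> (n, U, restrict (\<lambda>_. x) U) \<in> D"
  unfolding diffeology_def by (drule conjunct2, drule conjunct1) blast
lemma diff_local: "diffeology X D \<Longrightarrow> eopen n U \<Longrightarrow> P \<in> U \<rightarrow> X \<Longrightarrow> P \<in> extensional U \<Longrightarrow>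
   (\<And>u. u \<in> U \<Longrightarrow> \<exists>V. eopen n V \<and> u \<in> V \<and> V \<subseteq> U \<and> (n, V, restrict P V) \<in> D) \<Longrightarrow> (n, U, P) \<in> D"
  unfolding diffeology_def by (drule conjunct2, drule conjunct2, drule conjunct1) blast
lemma diff_comp: "diffeology X D \<Longrightarrow> (n, U, P) \<in> D \<Longrightarrow> eopen m V \<Longrightarrow> smooth_map m V n F \<Longrightarrow> F ` V \<subseteq> U
   \<Longrightarrow> (m, V, restrict (P \<circ> F) V) \<in> D"
  unfolding diffeology_def
  apply (drule conjunct2, drule conjunct2, drule conjunct2)
  apply (erule allE[of _ n], erule allE[of _ U], erule allE[of _ P], erule allE[of _ m], erule allE[of _ V], erule allE[of _ F])
  apply (erule mp)
  apply (intro conjI)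
     apply assumption+
  done
lemma diff_restrict_eq: "diffeology X D \<Longrightarrow> (n, U, P) \<in> D \<Longrightarrow> restrict P U = P"
  using diff_plot[of X D n U P] by (simp add: extensional_restrict)

lemma quot_local:
  assumes D: "diffeology X D" and P: "(n, U, P) \<in> quot_diff X D q" and u: "u \<in> U"
  shows "\<exists>V Q. eopen n V \<and> u \<in> V \<and> V \<subseteq> U \<and> (n, V, Q) \<in> D \<and> (\<forall>v\<in>V. P v = q (Q v))"
proof -
  have P': "eopen n U" "P \<in> extensional U" "P \<in> U \<rightarrow> q ` X"
    and L: "\<forall>u\<in>U. \<exists>V. eopen n V \<and> u \<in> V \<and> V \<subseteq> U \<and>
         ((\<exists>c. \<forall>v\<in>V. P v = c) \<or> (\<exists>Q. (n, V, Q) \<in> D \<and> (\<forall>v\<in>V. P v = q (Q v))))"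
    using P unfolding quot_diff_def by auto
  obtain V where V: "eopen n V" "u \<in> V" "V \<subseteq> U"
    "(\<exists>c. \<forall>v\<in>V. P v = c) \<or> (\<exists>Q. (n, V, Q) \<in> D \<and> (\<forall>v\<in>V. P v = q (Q v)))"
    using L u by blast
  show ?thesis
  proof (cases "\<exists>Q. (n, V, Q) \<in> D \<and> (\<forall>v\<in>V. P v = q (Q v))")
    case True then show ?thesis using V by blast
  next
    case False
    then obtain c where c: "\<forall>v\<in>V. P v = c" using V by blast
    have "P u \<in> q ` X" using P'(3) u by blast
    then have "c \<in> q ` X" using c V(2) by auto
    then obtain x0 where x0: "x0 \<in> X" "c = q x0" by auto
    have "(n, V, restrict (\<lambda>_. x0) V) \<in> D" using diff_const[OF D V(1) x0(1)] .
    then show ?thesis using V c x0 by (intro exI[of _ V] exI[of _ "restrict (\<lambda>_. x0) V"]) auto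
  qed
qed

lemma quot_intro:
  assumes "eopen n U" "P \<in> extensional U" "P \<in> U \<rightarrow> q ` X"
    "\<And>u. u \<in> U \<Longrightarrow> \<exists>V Q. eopen n V \<and> u \<in> V \<and> V \<subseteq> U \<and> (n, V, Q) \<in> D \<and> (\<forall>v\<in>V. P v = q (Q v))"
  shows "(n, U, P) \<in> quot_diff X D q"
  unfolding quot_diff_def using assms by blast

lemma quot_plot: "(n, U, P) \<in> quot_diff X D q \<Longrightarrow> eopen n U \<and> P \<in> extensional U \<and> P \<in> U \<rightarrow> q ` X"
  unfolding quot_diff_def by blast

lemma qd2:
  assumes D: "diffeology X D" and a: "eopen n U \<and> c \<in> q ` X"
  shows "(n, U, restrict (\<lambda>_. c) U) \<in> quot_diff X D q"
proof -
  obtain x0 where x0: "x0 \<in> X" "c = q x0" using a by auto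
  have d: "(n, U, restrict (\<lambda>_. x0) U) \<in> D" using a x0 diff_const[OF D, of n U x0] by auto
  show ?thesis
  proof (rule quot_intro)
    fix u assume "u \<in> U"
    then show "\<exists>V Q. eopen n V \<and> u \<in> V \<and> V \<subseteq> U \<and> (n, V, Q) \<in> D \<and> (\<forall>v\<in>V. restrict (\<lambda>_. c) U v = q (Q v))"
      using a x0 d by (intro exI[of _ U] exI[of _ "restrict (\<lambda>_. x0) U"]) auto
  qed (use a x0 in auto)
qed

lemma qd3:
  assumes D: "diffeology X D" and a: "eopen n U \<and> P \<in> U \<rightarrow> q ` X \<and> P \<in> extensional U \<and>
       (\<forall>u\<in>U. \<exists>V. eopen n V \<and> u \<in> V \<and> V \<subseteq> U \<and> (n, V, restrict P V) \<in> quot_diff X D q)"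
  shows "(n, U, P) \<in> quot_diff X D q"
proof (rule quot_intro)
  fix u assume u: "u \<in> U"
  then obtain V where V: "eopen n V" "u \<in> V" "V \<subseteq> U" "(n, V, restrict P V) \<in> quot_diff X D q"
    using a by blast
  obtain W Q where W: "eopen n W" "u \<in> W" "W \<subseteq> V" "(n, W, Q) \<in> D" "\<forall>v\<in>W. restrict P V v = q (Q v)"
    using quot_local[OF D V(4) V(2)] by blast
  then show "\<exists>V Q. eopen n V \<and> u \<in> V \<and> V \<subseteq> U \<and> (n, V, Q) \<in> D \<and> (\<forall>v\<in>V. P v = q (Q v))"
    using V by (intro exI[of _ W] exI[of _ Q]) (auto simp: subset_iff)
qed (use a in auto)

lemma qd4:
  assumes D: "diffeology X D" and a: "(n, U, P) \<in> quot_diff X D q \<and> eopen m V \<and> smooth_map m V n F \<and> F ` V \<subseteq> U"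
  shows "(m, V, restrict (P \<circ> F) V) \<in> quot_diff X D q"
proof -
  have a1: "(n, U, P) \<in> quot_diff X D q" and a2: "eopen m V" and a3: "smooth_map m V n F"
    and a4: "F ` V \<subseteq> U" using a by auto
  have P: "eopen n U" "P \<in> extensional U" "P \<in> U \<rightarrow> q ` X" using quot_plot[OF a1] by auto
  show ?thesis
  proof (rule quot_intro)
    show "eopen m V" using a2 .
    show "restrict (P \<circ> F) V \<in> V \<rightarrow> q ` X" using a4 P(3) by (auto intro!: funcset_mem[OF P(3)])
  next
    fix v assume v: "v \<in> V"
    then have Fv: "F v \<in> U" using a4 by blast
    obtain W Q where W: "eopen n W" "F v \<in> W" "W \<subseteq> U" "(n, W, Q) \<in> D" "\<forall>w\<in>W. P w = q (Q w)"
      using quot_local[OF D a1 Fv] by blast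
    define V' where "V' = {x\<in>V. F x \<in> W}"
    have V': "eopen m V'" unfolding V'_def by (rule preimage_open[OF a2 a3 W(1)])
    have sm: "smooth_map m V' n F" by (rule smooth_map_mono[OF a3]) (auto simp: V'_def)
    have "(m, V', restrict (Q \<circ> F) V') \<in> D"
      by (rule diff_comp[OF D W(4) V' sm]) (auto simp: V'_def)
    moreover have "v \<in> V'" using v W(2) by (simp add: V'_def)
    moreover have "V' \<subseteq> V" by (auto simp: V'_def)
    moreover have "\<forall>x\<in>V'. restrict (P \<circ> F) V x = q (restrict (Q \<circ> F) V' x)"
      using W(5) by (auto simp: V'_def)
    ultimately show "\<exists>V'' Q'. eopen m V'' \<and> v \<in> V'' \<and> V'' \<subseteq> V \<and> (m, V'', Q') \<in> D \<and>
        (\<forall>x\<in>V''. restrict (P \<circ> F) V x = q (Q' x))"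
      using V' by blast
  qed simp
qed

lemma quot_diffeology:
  assumes D: "diffeology X D"
  shows "diffeology (q ` X) (quot_diff X D q)"
  unfolding diffeology_def
  apply (intro conjI)
  subgoal using quot_plot by blast
  subgoal by (intro allI impI) (rule qd2[OF D])
  subgoal by (intro allI impI) (rule qd3[OF D])
  subgoal by (intro allI impI) (rule qd4[OF D])
  done

lemma proj_econt: "j < n \<Longrightarrow> econt n U (\<lambda>x. x j)"
  unfolding econt_def
proof (intro ballI allI impI)
  fix x e assume "j < n" "x \<in> U" "(e::real) > 0"
  then show "\<exists>d>0. \<forall>y\<in>U. (\<forall>i<n. \<bar>y i - x i\<bar> < d) \<longrightarrow> \<bar>y j - x j\<bar> < e"
    by (intro exI[of _ e]) auto
qed

lemma const_Ck: "(\<lambda>_. c) \<in> Ck n U k"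
proof (induction k arbitrary: c)
  case 0 then show ?case by (simp add: econt_def)
next
  case (Suc k)
  have "has_pd U (\<lambda>_. c) i (\<lambda>_. 0)" for i unfolding has_pd_def by simp
  then show ?case using Suc.IH[of 0] by (auto simp: econt_def)
qed

lemma proj_Ck: "j < n \<Longrightarrow> (\<lambda>x. x j) \<in> Ck n U k"
proof (induction k)
  case 0 then show ?case using proj_econt by simp
next
  case (Suc k)
  have "econt n U (\<lambda>x. x j)" using Suc.prems proj_econt by simp
  moreover have "has_pd U (\<lambda>x. x j) i (\<lambda>_. if i = j then 1 else 0)" for i
    unfolding has_pd_def
  proof
    fix x :: "nat \<Rightarrow> real"
    show "((\<lambda>t. (x(i := x i + t)) j) has_real_derivative (if i = j then 1 else 0)) (at 0)"
    proof (cases "i = j")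
      case True
      then show ?thesis by (auto intro!: derivative_eq_intros)
    next
      case False
      then show ?thesis by simp
    qed
  qed
  ultimately show ?case using const_Ck by (auto intro!: bexI[of _ "\<lambda>_. if _ = j then 1 else 0"])
qed

lemma id_smooth: "eopen n V \<Longrightarrow> smooth_map n V n (\<lambda>x. x)"
  unfolding smooth_map_def smooth_fun_def eopen_def using proj_Ck by blast

lemma diff_restrict:
  assumes D: "diffeology X D" and P: "(n, U, P) \<in> D" and V: "eopen n V" "V \<subseteq> U"
  shows "(n, V, restrict P V) \<in> D"
proof -
  have "(n, V, restrict (P \<circ> (\<lambda>x. x)) V) \<in> D"
    by (rule diff_comp[OF D P V(1) id_smooth[OF V(1)]]) (use V in auto)
  then show ?thesis by (simp add: comp_def)
qed

lemma restrict_eqI: "(\<And>v. v \<in> V \<Longrightarrow> f v = g v) \<Longrightarrow> restrict f V = restrict g V"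
  by (rule restrict_ext) simp

context gpd begin

lemma to_quot:
  assumes DG: "diffeology (arr G) (darr G)" and h: "dsmooth DX (darr G) h"
  shows "dsmooth DX (quot_diff (arr G) (darr G) (ab_class G)) (\<lambda>x. ab_class G (h x))"
  unfolding dsmooth_def
proof (intro allI impI)
  fix n U P assume P: "(n, U, P) \<in> DX"
  have Q: "(n, U, restrict (h \<circ> P) U) \<in> darr G" using h P unfolding dsmooth_def by blast
  note Qp = diff_plot[OF DG Q]
  show "(n, U, restrict ((\<lambda>x. ab_class G (h x)) \<circ> P) U) \<in> quot_diff (arr G) (darr G) (ab_class G)"
  proof (rule quot_intro)
    show "eopen n U" using Qp by blast
    show "restrict ((\<lambda>x. ab_class G (h x)) \<circ> P) U \<in> U \<rightarrow> ab_class G ` arr G"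
      using Qp by (auto dest!: funcset_mem[of _ U "arr G"])
  next
    fix u assume "u \<in> U"
    then show "\<exists>V Q. eopen n V \<and> u \<in> V \<and> V \<subseteq> U \<and> (n, V, Q) \<in> darr G \<and>
      (\<forall>v\<in>V. restrict ((\<lambda>x. ab_class G (h x)) \<circ> P) U v = ab_class G (Q v))"
      using Qp Q by (intro exI[of _ U] exI[of _ "restrict (h \<circ> P) U"]) auto
  qed simp
qed

lemma from_quot:
  assumes DG: "diffeology (arr G) (darr G)" and DY: "diffeology Y DY"
    and h: "dsmooth (darr G) DY h" and hY: "h \<in> arr G \<rightarrow> Y"
    and f: "\<And>g. g \<in> arr G \<Longrightarrow> f (ab_class G g) = h g"
  shows "dsmooth (quot_diff (arr G) (darr G) (ab_class G)) DY f"
  unfolding dsmooth_def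
proof (intro allI impI)
  fix n U P assume P: "(n, U, P) \<in> quot_diff (arr G) (darr G) (ab_class G)"
  note Pp = quot_plot[OF P]
  show "(n, U, restrict (f \<circ> P) U) \<in> DY"
  proof (rule diff_local[OF DY])
    show "eopen n U" using Pp by blast
    show "restrict (f \<circ> P) U \<in> U \<rightarrow> Y"
    proof (rule Pi_I)
      fix u assume u: "u \<in> U"
      then obtain g where g: "g \<in> arr G" "P u = ab_class G g" using Pp by blast
      then show "restrict (f \<circ> P) U u \<in> Y" using u f hY by auto
    qed
    show "restrict (f \<circ> P) U \<in> extensional U" by simp
  next
    fix u assume u: "u \<in> U"
    obtain V Q where V: "eopen n V" "u \<in> V" "V \<subseteq> U" "(n, V, Q) \<in> darr G"
      "\<forall>v\<in>V. P v = ab_class G (Q v)" using quot_local[OF DG P u] by blast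
    have Qa: "Q \<in> V \<rightarrow> arr G" using diff_plot[OF DG V(4)] by blast
    have "(n, V, restrict (h \<circ> Q) V) \<in> DY" using h V(4) unfolding dsmooth_def by blast
    moreover have "restrict (restrict (f \<circ> P) U) V = restrict (h \<circ> Q) V"
      by (rule restrict_eqI) (use V Qa f in \<open>auto intro!: f funcset_mem[OF Qa]\<close>)
    ultimately show "\<exists>V. eopen n V \<and> u \<in> V \<and> V \<subseteq> U \<and> (n, V, restrict (restrict (f \<circ> P) U) V) \<in> DY"
      using V by metis
  qed
qed

end

context gpd begin

lemma comp_smooth:
  assumes DG: "diffeology (arr G) (darr G)"
    and cs: "dsmooth (sub_diff (prod_diff (darr G) (darr G)) (composable G)) (darr G) (\<lambda>p. gcomp G (fst p) (snd p))"
  shows "dsmooth (sub_diff (prod_diff (darr H) (darr H)) (composable H)) (darr H) (\<lambda>p. gcomp H (fst p) (snd p))"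
  unfolding dsmooth_def H_simps
proof (intro allI impI)
  let ?DH = "quot_diff (arr G) (darr G) (ab_class G)"
  let ?q = "ab_class G"
  fix n U P assume "(n, U, P) \<in> sub_diff (prod_diff ?DH ?DH) (composable H)"
  then have P: "eopen n U" "P \<in> extensional U" "(n, U, restrict (fst \<circ> P) U) \<in> ?DH"
    "(n, U, restrict (snd \<circ> P) U) \<in> ?DH" "P ` U \<subseteq> composable H"
    unfolding sub_diff_def prod_diff_def by auto
  have K: "\<exists>a b. a \<in> arr G \<and> b \<in> arr G \<and> gsrc G a = gtgt G b \<and> fst (P u) = ?q a \<and> snd (P u) = ?q b"
    if u: "u \<in> U" for u
  proof -
    have "P u \<in> composable H" using P(5) u by blast
    then obtain a b where ab: "a \<in> arr G" "b \<in> arr G" "fst (P u) = ?q a" "snd (P u) = ?q b"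
      "gsrc H (?q a) = gtgt H (?q b)"
      unfolding composable_def H_simps by (cases "P u") auto
    then show ?thesis by auto
  qed
  show "(n, U, restrict ((\<lambda>p. gcomp H (fst p) (snd p)) \<circ> P) U) \<in> ?DH"
  proof (rule quot_intro)
    show "eopen n U" by (rule P(1))
    show "restrict ((\<lambda>p. gcomp H (fst p) (snd p)) \<circ> P) U \<in> U \<rightarrow> ?q ` arr G"
    proof (rule Pi_I)
      fix u assume u: "u \<in> U"
      then obtain a b where ab: "a \<in> arr G" "b \<in> arr G" "gsrc G a = gtgt G b" "fst (P u) = ?q a" "snd (P u) = ?q b"
        using K by blast
      then show "restrict ((\<lambda>p. gcomp H (fst p) (snd p)) \<circ> P) U u \<in> ?q ` arr G"
        using u by simp
    qed
  next
    fix u assume u: "u \<in> U"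
    obtain V1 Q1 where V1: "eopen n V1" "u \<in> V1" "V1 \<subseteq> U" "(n, V1, Q1) \<in> darr G"
      "\<forall>v\<in>V1. restrict (fst \<circ> P) U v = ?q (Q1 v)" using quot_local[OF DG P(3) u] by blast
    obtain V2 Q2 where V2: "eopen n V2" "u \<in> V2" "V2 \<subseteq> U" "(n, V2, Q2) \<in> darr G"
      "\<forall>v\<in>V2. restrict (snd \<circ> P) U v = ?q (Q2 v)" using quot_local[OF DG P(4) u] by blast
    define V where "V = V1 \<inter> V2"
    have V: "eopen n V" "u \<in> V" "V \<subseteq> U" using eopen_Int[OF V1(1) V2(1)] V1 V2 by (auto simp: V_def)
    have Q1: "(n, V, restrict Q1 V) \<in> darr G" by (rule diff_restrict[OF DG V1(4) V(1)]) (auto simp: V_def)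
    have Q2: "(n, V, restrict Q2 V) \<in> darr G" by (rule diff_restrict[OF DG V2(4) V(1)]) (auto simp: V_def)
    have Q1a: "Q1 v \<in> arr G" if "v \<in> V" for v using diff_plot[OF DG V1(4)] that by (auto simp: V_def)
    have Q2a: "Q2 v \<in> arr G" if "v \<in> V" for v using diff_plot[OF DG V2(4)] that by (auto simp: V_def)
    have fstP: "fst (P v) = ?q (Q1 v)" if v: "v \<in> V" for v
    proof -
      have "v \<in> V1" "v \<in> U" using v V by (auto simp: V_def)
      moreover have "restrict (fst \<circ> P) U v = ?q (Q1 v)" using V1(5) \<open>v \<in> V1\<close> by blast
      ultimately show ?thesis by simp
    qed
    have sndP: "snd (P v) = ?q (Q2 v)" if v: "v \<in> V" for v
    proof -
      have "v \<in> V2" "v \<in> U" using v V by (auto simp: V_def)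
      moreover have "restrict (snd \<circ> P) U v = ?q (Q2 v)" using V2(5) \<open>v \<in> V2\<close> by blast
      ultimately show ?thesis by simp
    qed
    have cmp: "gsrc G (Q1 v) = gtgt G (Q2 v)" if v: "v \<in> V" for v
    proof -
      obtain a b where ab: "a \<in> arr G" "b \<in> arr G" "gsrc G a = gtgt G b" "fst (P v) = ?q a" "snd (P v) = ?q b"
        using K v V by blast
      have "gsrc G (Q1 v) = gsrc H (?q (Q1 v))" using Q1a v by simp
      also have "\<dots> = gsrc G a" using fstP[OF v] ab(1,4) by (metis H_src)
      also have "\<dots> = gtgt G b" by (rule ab(3))
      also have "\<dots> = gtgt H (?q (Q2 v))" using sndP[OF v] ab(2,5) by (metis H_tgt)
      also have "\<dots> = gtgt G (Q2 v)" using Q2a v by simp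
      finally show ?thesis .
    qed
    define R where "R = restrict (\<lambda>v. (Q1 v, Q2 v)) V"
    have "(n, V, R) \<in> sub_diff (prod_diff (darr G) (darr G)) (composable G)"
    proof -
      have "restrict (fst \<circ> R) V = restrict Q1 V" "restrict (snd \<circ> R) V = restrict Q2 V"
        by (auto simp: R_def)
      moreover have "R ` V \<subseteq> composable G" using Q1a Q2a cmp by (auto simp: R_def composable_def)
      ultimately show ?thesis using V Q1 Q2 unfolding sub_diff_def prod_diff_def R_def by auto
    qed
    then have RD: "(n, V, restrict ((\<lambda>p. gcomp G (fst p) (snd p)) \<circ> R) V) \<in> darr G"
      using cs unfolding dsmooth_def by blast
    have "\<forall>v\<in>V. restrict ((\<lambda>p. gcomp H (fst p) (snd p)) \<circ> P) U v
        = ?q (restrict ((\<lambda>p. gcomp G (fst p) (snd p)) \<circ> R) V v)"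
      using V fstP sndP Q1a Q2a cmp by (auto simp: R_def)
    then show "\<exists>V Q. eopen n V \<and> u \<in> V \<and> V \<subseteq> U \<and> (n, V, Q) \<in> darr G \<and>
      (\<forall>v\<in>V. restrict ((\<lambda>p. gcomp H (fst p) (snd p)) \<circ> P) U v = ?q (Q v))"
      using V RD by blast
  qed simp
qed

lemma subd:
  assumes DG: "diffeology (arr G) (darr G)"
    and ls: "\<forall>g\<in>arr G. locally_subductive_at (darr G) (dobj G) f g"
    and f: "\<And>g. g \<in> arr G \<Longrightarrow> f' (ab_class G g) = f g"
  shows "\<forall>c\<in>arr H. locally_subductive_at (darr H) (dobj H) f' c"
  unfolding H_simps
proof
  fix c assume "c \<in> ab_class G ` arr G"
  then obtain g0 where g0: "g0 \<in> arr G" "c = ab_class G g0" by auto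
  show "locally_subductive_at (quot_diff (arr G) (darr G) (ab_class G)) (dobj G) f' c"
    unfolding locally_subductive_at_def
  proof (intro allI impI)
    fix n U P assume P: "(n, U, P) \<in> dobj G \<and> zvec \<in> U \<and> P zvec = f' c"
    then have "P zvec = f g0" using f g0 by simp
    then obtain V Q where VQ: "eopen n V" "zvec \<in> V" "V \<subseteq> U" "(n, V, Q) \<in> darr G" "Q zvec = g0"
      "\<forall>v\<in>V. f (Q v) = P v"
      using ls g0 P unfolding locally_subductive_at_def by blast
    have Qa: "Q v \<in> arr G" if "v \<in> V" for v using diff_plot[OF DG VQ(4)] that by auto
    have "(n, V, restrict (ab_class G \<circ> Q) V) \<in> quot_diff (arr G) (darr G) (ab_class G)"
    proof (rule quot_intro)
      show "restrict (ab_class G \<circ> Q) V \<in> V \<rightarrow> ab_class G ` arr G" using Qa by auto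
      fix u assume "u \<in> V"
      then show "\<exists>Va Qa. eopen n Va \<and> u \<in> Va \<and> Va \<subseteq> V \<and> (n, Va, Qa) \<in> darr G \<and>
          (\<forall>v\<in>Va. restrict (ab_class G \<circ> Q) V v = ab_class G (Qa v))"
        using VQ by (intro exI[of _ V] exI[of _ Q]) auto
    qed (use VQ in auto)
    moreover have "restrict (ab_class G \<circ> Q) V zvec = c" using VQ g0 by simp
    moreover have "\<forall>v\<in>V. f' (restrict (ab_class G \<circ> Q) V v) = P v" using VQ Qa f by simp
    ultimately show "\<exists>V Q. eopen n V \<and> zvec \<in> V \<and> V \<subseteq> U \<and>
        (n, V, Q) \<in> quot_diff (arr G) (darr G) (ab_class G) \<and> Q zvec = c \<and> (\<forall>v\<in>V. f' (Q v) = P v)"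
      using VQ by blast
  qed
qed

end

theorem mainTheorem15:
  fixes G :: "('g, 'm) dgpd"
  assumes "locally_subductive_dgpd G"
  shows "locally_subductive_dgpd (abelianization G)"
proof -
  have dg: "diffeological_groupoid G" and ss: "local_subduction (arr G) (darr G) (dobj G) (gsrc G)"
    and st: "local_subduction (arr G) (darr G) (dobj G) (gtgt G)"
    using assms unfolding locally_subductive_dgpd_def by auto
  have gp: "groupoid G" and DG: "diffeology (arr G) (darr G)" and DO: "diffeology (obj G) (dobj G)"
    and s: "dsmooth (darr G) (dobj G) (gsrc G)" and t: "dsmooth (darr G) (dobj G) (gtgt G)"
    and i: "dsmooth (dobj G) (darr G) (gid G)" and v: "dsmooth (darr G) (darr G) (ginv G)"
    and c: "dsmooth (sub_diff (prod_diff (darr G) (darr G)) (composable G)) (darr G)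
        (\<lambda>p. gcomp G (fst p) (snd p))"
    using dg unfolding diffeological_groupoid_def by auto
  interpret gpd G by (rule gpd.intro[OF gp])
  have srcH: "dsmooth (darr H) (dobj H) (gsrc H)"
    unfolding H_simps by (rule from_quot[OF DG DO s]) (auto simp: src_in)
  have tgtH: "dsmooth (darr H) (dobj H) (gtgt H)"
    unfolding H_simps by (rule from_quot[OF DG DO t]) (auto simp: tgt_in)
  have DH: "diffeology (arr H) (darr H)" unfolding H_simps by (rule quot_diffeology[OF DG])
  have idH: "dsmooth (dobj H) (darr H) (gid H)"
    unfolding H_simps using to_quot[OF DG i] by simp
  have invq: "dsmooth (darr G) (darr H) (\<lambda>g. ab_class G (ginv G g))"
    unfolding H_simps by (rule to_quot[OF DG v])
  have invH: "dsmooth (darr H) (darr H) (ginv H)"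
    using from_quot[OF DG DH invq] unfolding H_simps by auto
  have dgH: "diffeological_groupoid H"
    unfolding diffeological_groupoid_def
    using H_groupoid DH DO srcH tgtH idH invH comp_smooth[OF DG c] by (simp add: H_simps)
  have "local_subduction (arr H) (darr H) (dobj H) (gsrc H)"
    unfolding local_subduction_def
    using srcH subd[where f="gsrc G" and f'="gsrc H", OF DG _ H_src] ss unfolding local_subduction_def by blast
  moreover have "local_subduction (arr H) (darr H) (dobj H) (gtgt H)"
    unfolding local_subduction_def
    using tgtH subd[where f="gtgt G" and f'="gtgt H", OF DG _ H_tgt] st unfolding local_subduction_def by blast
  ultimately show ?thesis using dgH unfolding locally_subductive_dgpd_def by blast
qed

end
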